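(* Let $D$ be a unitrivalent diagram in $B^{csl}(2)$. If $D$ has a connected component of degree at least $2$, then $D$ is trivial modulo ( * ), i.e. $D=0$ in $B^{cl}(2)$.
   Context: Fix an integer $k\ge 1$. A unitrivalent diagram colored by $\{1,\dots,k\}$ is a finite graph all of whose vertices are univalent or trivalent. Each trivalent vertex carries a cyclic ordering of its incident half-edges, each univalent vertex is labeled by a color in $\{1,\dots,k\}$, and every connected component contains at least one univalent vertex. Its degree is half the total number of vertices; the degree of a connected component is defined likewise. $B^{csl}(k)$ is the graded real vector space spanned by such diagrams modulo three relations: - the AS relation: reversing the cyclic order at one trivalent vertex negates the diagram; - the standard IHX relation; - every diagram having a connected component that is not a tree is zero. Relation ( * ) is defined as follows. Let $x\in\{1,\dots,k\}$ be a color, and let $E$ be a diagram which has, besides its colored univalent vertices, exactly one extra uncolored univalent vertex $u$. Then $\sum_w E_w=0$. The sum runs over all univalent vertices $w$ of $E$ of color $x$. The diagram $E_w$ is obtained by attaching the edge ending at $u$ to an interior point of the edge incident to $w$, creating a new trivalent vertex, with cyclic orientation fixed by a uniform convention. $B^{cl}(k)$ is the quotient of $B^{csl}(k)$ by all relations ( * ). A diagram is trivial modulo ( * ) if its image in $B^{cl}(k)$ is zero. *)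

theory Defs
  imports Complex_Main
begin

text \<open>A diagram is given by a finite set of darts (half-edges); an involution
  edg without fixed points pairing darts into edges; a permutation rot of the
  darts whose orbits are the vertices (orbits of size 1: univalent vertices,
  orbits of size 3: trivalent vertices, the 3-cycle being the cyclic order);
  and a colouring of (the unique darts of) univalent vertices.\<close>

record diagram =
  darts :: "nat set"
  edg   :: "nat \<Rightarrow> nat"
  rot   :: "nat \<Rightarrow> nat"
  col   :: "nat \<Rightarrow> nat option"

definition univalent :: "diagram \<Rightarrow> nat \<Rightarrow> bool" where
  "univalent D h \<longleftrightarrow> h \<in> darts D \<and> rot D h = h"

definition trivalent :: "diagram \<Rightarrow> nat \<Rightarrow> bool" where
  "trivalent D h \<longleftrightarrow> h \<in> darts D \<and> rot D h \<noteq> h"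

definition vert :: "diagram \<Rightarrow> nat \<Rightarrow> nat set" where
  "vert D h = {h, rot D h, rot D (rot D h)}"

definition steps :: "diagram \<Rightarrow> (nat \<times> nat) set" where
  "steps D = {(x, edg D x) | x. x \<in> darts D} \<union> {(x, rot D x) | x. x \<in> darts D}"

definition component_of :: "diagram \<Rightarrow> nat \<Rightarrow> nat set" where
  "component_of D h = (steps D)\<^sup>* `` {h}"

definition components :: "diagram \<Rightarrow> nat set set" where
  "components D = component_of D ` darts D"

definition vertices_in :: "diagram \<Rightarrow> nat set \<Rightarrow> nat set set" where
  "vertices_in D C = vert D ` C"

text \<open>A connected component is a tree iff #edges = #vertices - 1.\<close>
definition is_tree_comp :: "diagram \<Rightarrow> nat set \<Rightarrow> bool" where
  "is_tree_comp D C \<longleftrightarrow> card C div 2 + 1 = card (vertices_in D C)"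

definition wf_graph :: "diagram \<Rightarrow> bool" where
  "wf_graph D \<longleftrightarrow> finite (darts D)
     \<and> (\<forall>h\<in>darts D. edg D h \<in> darts D \<and> edg D h \<noteq> h \<and> edg D (edg D h) = h)
     \<and> bij_betw (rot D) (darts D) (darts D)
     \<and> (\<forall>h\<in>darts D. rot D h = h \<or> rot D (rot D (rot D h)) = h)
     \<and> (\<forall>h\<in>darts D. \<exists>h'\<in>component_of D h. univalent D h')"

definition is_diagram :: "nat \<Rightarrow> diagram \<Rightarrow> bool" where
  "is_diagram k D \<longleftrightarrow> wf_graph D
     \<and> (\<forall>h. univalent D h \<longrightarrow> (\<exists>c\<in>{1..k}. col D h = Some c))"

definition is_prediagram :: "nat \<Rightarrow> diagram \<Rightarrow> nat \<Rightarrow> bool" where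
  "is_prediagram k E u \<longleftrightarrow> wf_graph E \<and> univalent E u \<and> col E u = None
     \<and> (\<forall>h. univalent E h \<and> h \<noteq> u \<longrightarrow> (\<exists>c\<in>{1..k}. col E h = Some c))"

definition diag_iso :: "diagram \<Rightarrow> diagram \<Rightarrow> bool" where
  "diag_iso D D' \<longleftrightarrow> (\<exists>f. bij_betw f (darts D) (darts D')
     \<and> (\<forall>h\<in>darts D. f (edg D h) = edg D' (f h) \<and> f (rot D h) = rot D' (f h))
     \<and> (\<forall>h. univalent D h \<longrightarrow> col D' (f h) = col D h))"

text \<open>AS: reverse the cyclic order at the vertex of dart v.\<close>
definition flip :: "diagram \<Rightarrow> nat \<Rightarrow> diagram" where
  "flip D v = D\<lparr>rot := (\<lambda>h. if h \<in> vert D v then rot D (rot D h) else rot D h)\<rparr>"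

definition reattach :: "diagram \<Rightarrow> nat \<Rightarrow> nat \<Rightarrow> nat \<Rightarrow> nat \<Rightarrow> nat \<Rightarrow> nat \<Rightarrow> nat \<Rightarrow> nat \<Rightarrow> diagram" where
  "reattach D a1 a2 b1 b2 m1 m2 m3 m4 = D\<lparr>edg := (\<lambda>h.
      if h = a1 then m1 else if h = m1 then a1
      else if h = a2 then m2 else if h = m2 then a2
      else if h = b1 then m3 else if h = m3 then b1
      else if h = b2 then m4 else if h = m4 then b2
      else edg D h)\<rparr>"

definition ihx_config :: "diagram \<Rightarrow> nat \<Rightarrow> nat \<Rightarrow> bool" where
  "ihx_config D a b \<longleftrightarrow> trivalent D a \<and> trivalent D b \<and> edg D a = b
     \<and> b \<notin> vert D a
     \<and> (\<forall>h\<in>{rot D a, rot D (rot D a), rot D b, rot D (rot D b)}.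
          edg D h \<notin> vert D a \<union> vert D b)"

text \<open>Attaching the edge ending at the uncoloured univalent vertex u to an interior
  point of the edge incident to w; new darts n1 (towards w) and n2, new trivalent
  vertex with cyclic order (u, n1, n2).\<close>
definition attach :: "diagram \<Rightarrow> nat \<Rightarrow> nat \<Rightarrow> nat \<Rightarrow> nat \<Rightarrow> diagram" where
  "attach E u w n1 n2 = E\<lparr>darts := darts E \<union> {n1, n2},
     edg := (\<lambda>h. if h = w then n1 else if h = n1 then w
                 else if h = n2 then edg E w else if h = edg E w then n2 else edg E h),
     rot := (\<lambda>h. if h = u then n1 else if h = n1 then n2 else if h = n2 then u else rot E h),
     col := (col E)(u := None, n1 := None, n2 := None)\<rparr>"

definition delta :: "diagram \<Rightarrow> diagram \<Rightarrow> real" where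
  "delta D = (\<lambda>X. if X = D then 1 else 0)"

inductive_set rels_csl :: "nat \<Rightarrow> (diagram \<Rightarrow> real) set" for k where
  iso: "\<lbrakk>is_diagram k D; is_diagram k D'; diag_iso D D'\<rbrakk>
        \<Longrightarrow> (\<lambda>X. delta D X - delta D' X) \<in> rels_csl k"
| AS: "\<lbrakk>is_diagram k D; trivalent D v\<rbrakk>
        \<Longrightarrow> (\<lambda>X. delta D X + delta (flip D v) X) \<in> rels_csl k"
| IHX: "\<lbrakk>is_diagram k D; ihx_config D a b;
         a1 = rot D a; a2 = rot D a1; b1 = rot D b; b2 = rot D b1;
         l1 = edg D a1; l2 = edg D a2; l3 = edg D b1; l4 = edg D b2\<rbrakk>
        \<Longrightarrow> (\<lambda>X. delta D X + delta (reattach D a1 a2 b1 b2 l2 l3 l1 l4) X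
                 + delta (reattach D a1 a2 b1 b2 l3 l1 l2 l4) X) \<in> rels_csl k"
| nontree: "\<lbrakk>is_diagram k D; C \<in> components D; \<not> is_tree_comp D C\<rbrakk>
        \<Longrightarrow> delta D \<in> rels_csl k"

inductive_set rels_cl :: "nat \<Rightarrow> (diagram \<Rightarrow> real) set" for k where
  csl: "r \<in> rels_csl k \<Longrightarrow> r \<in> rels_cl k"
| star: "\<lbrakk>is_prediagram k E u; x \<in> {1..k}; n1 \<notin> darts E; n2 \<notin> darts E; n1 \<noteq> n2\<rbrakk>
        \<Longrightarrow> (\<lambda>X. \<Sum>w\<in>{w. univalent E w \<and> col E w = Some x}.
                     delta (attach E u w n1 n2) X) \<in> rels_cl k"

inductive_set lin_span :: "('a \<Rightarrow> real) set \<Rightarrow> ('a \<Rightarrow> real) set" for R where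
  zero: "(\<lambda>_. 0) \<in> lin_span R"
| add: "\<lbrakk>r \<in> R; s \<in> lin_span R\<rbrakk> \<Longrightarrow> (\<lambda>X. s X + c * r X) \<in> lin_span R"

definition trivial_cl :: "nat \<Rightarrow> diagram \<Rightarrow> bool" where
  "trivial_cl k D \<longleftrightarrow> delta D \<in> lin_span (rels_cl k)"

definition comp_degree :: "diagram \<Rightarrow> nat set \<Rightarrow> real" where
  "comp_degree D C = real (card (vertices_in D C)) / 2"

end

theory Submission
  imports Defs
begin

section \<open>Span\<close>

lemma span_rel: "r \<in> R \<Longrightarrow> r \<in> lin_span R"
proof -
  assume "r \<in> R"
  from lin_span.add[OF this lin_span.zero, of 1] show ?thesis by simp
qed

lemma span_add: assumes "t \<in> lin_span R" "s \<in> lin_span R" shows "(\<lambda>X. s X + t X) \<in> lin_span R"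
  using assms
proof (induction t rule: lin_span.induct)
  case zero
  then show ?case by simp
next
  case (add r t c)
  have "(\<lambda>X. (s X + t X) + c * r X) \<in> lin_span R"
    by (rule lin_span.add[OF add.hyps(1) add.IH[OF add.prems]])
  then show ?case by (simp add: add.assoc)
qed

lemma span_scale: "s \<in> lin_span R \<Longrightarrow> (\<lambda>X. c * s X) \<in> lin_span R"
proof (induction s rule: lin_span.induct)
  case zero
  then show ?case by (simp add: lin_span.zero)
next
  case (add r s d)
  have "(\<lambda>X. c * s X + (c * d) * r X) \<in> lin_span R"
    by (rule lin_span.add[OF add.hyps(1) add.IH])
  then show ?case by (simp add: algebra_simps)
qed

lemma span_sum: "finite W \<Longrightarrow> (\<And>w. w \<in> W \<Longrightarrow> f w \<in> lin_span R)
   \<Longrightarrow> (\<lambda>X. \<Sum>w\<in>W. f w X) \<in> lin_span R"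
proof (induction W rule: finite_induct)
  case empty
  then show ?case using lin_span.zero by simp
next
  case (insert x F)
  have "(\<lambda>X. f x X + (\<Sum>w\<in>F. f w X)) \<in> lin_span R"
    using span_add[of _ R "f x"] insert by blast
  then show ?case using insert by simp
qed

lemma span_diff: "s \<in> lin_span R \<Longrightarrow> t \<in> lin_span R \<Longrightarrow> (\<lambda>X. s X - t X) \<in> lin_span R"
  using span_add[of "\<lambda>X. (-1) * t X" R s] span_scale[of t R "-1"] by simp

context
  fixes D :: diagram
  assumes wf: "wf_graph D"
begin

lemma wf_fin: "finite (darts D)" using wf unfolding wf_graph_def by blast
lemma wf_edg: "h \<in> darts D \<Longrightarrow> edg D h \<in> darts D" using wf unfolding wf_graph_def by blast
lemma wf_edg_ne: "h \<in> darts D \<Longrightarrow> edg D h \<noteq> h" using wf unfolding wf_graph_def by blast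
lemma wf_edg_edg: "h \<in> darts D \<Longrightarrow> edg D (edg D h) = h" using wf unfolding wf_graph_def by blast
lemma wf_rot_bij: "bij_betw (rot D) (darts D) (darts D)" using wf unfolding wf_graph_def by blast
lemma wf_rot: "h \<in> darts D \<Longrightarrow> rot D h \<in> darts D" using wf_rot_bij by (meson bij_betwE)
lemma wf_rot_inj: "x \<in> darts D \<Longrightarrow> y \<in> darts D \<Longrightarrow> rot D x = rot D y \<Longrightarrow> x = y"
  using wf_rot_bij by (meson bij_betw_imp_inj_on inj_onD)
lemma wf_rot3: "h \<in> darts D \<Longrightarrow> rot D h = h \<or> rot D (rot D (rot D h)) = h"
  using wf unfolding wf_graph_def by blast
lemma wf_comp: "h \<in> darts D \<Longrightarrow> \<exists>h'\<in>component_of D h. univalent D h'"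
  using wf unfolding wf_graph_def by blast

lemma edg_inj: "x \<in> darts D \<Longrightarrow> y \<in> darts D \<Longrightarrow> edg D x = edg D y \<Longrightarrow> x = y"
  by (metis wf_edg_edg)

lemma triv3: "trivalent D h \<Longrightarrow> rot D (rot D (rot D h)) = h"
  using wf_rot3 unfolding trivalent_def by blast

lemma triv_facts:
  assumes "trivalent D h"
  shows "rot D h \<noteq> h" "rot D (rot D h) \<noteq> h" "rot D (rot D h) \<noteq> rot D h"
    "rot D h \<in> darts D" "rot D (rot D h) \<in> darts D" "h \<in> darts D"
proof -
  have h: "h \<in> darts D" "rot D h \<noteq> h" using assms unfolding trivalent_def by auto
  show "rot D h \<noteq> h" "h \<in> darts D" using h by auto
  show r1: "rot D h \<in> darts D" using h wf_rot by auto
  show r2: "rot D (rot D h) \<in> darts D" using r1 wf_rot by auto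
  show "rot D (rot D h) \<noteq> rot D h" using h r1 wf_rot_inj by metis
  show "rot D (rot D h) \<noteq> h"
    using triv3[OF assms] h by metis
qed

lemma triv_rot: "trivalent D h \<Longrightarrow> trivalent D (rot D h)"
  using triv_facts unfolding trivalent_def by (metis triv3)

lemma univ_pre: "univalent D u \<Longrightarrow> x \<in> darts D \<Longrightarrow> rot D x = u \<Longrightarrow> x = u"
  unfolding univalent_def using wf_rot_inj by metis

lemma univ_or_triv: "h \<in> darts D \<Longrightarrow> univalent D h \<or> trivalent D h"
  unfolding univalent_def trivalent_def by auto

lemma steps_darts: "(x, y) \<in> steps D \<Longrightarrow> x \<in> darts D \<and> y \<in> darts D"
  unfolding steps_def using wf_edg wf_rot by auto

lemma star_darts: "(x, y) \<in> (steps D)\<^sup>* \<Longrightarrow> x \<in> darts D \<Longrightarrow> y \<in> darts D"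
  by (induction rule: rtrancl_induct) (auto dest: steps_darts)

lemma comp_sub: "x \<in> darts D \<Longrightarrow> component_of D x \<subseteq> darts D"
  unfolding component_of_def using star_darts by auto

end

context
  fixes D :: diagram
  assumes wf: "wf_graph D"
begin

lemma comp_closed_edg: "h \<in> component_of D x \<Longrightarrow> h \<in> darts D \<Longrightarrow> edg D h \<in> component_of D x"
  unfolding component_of_def steps_def
  by (auto intro: rtrancl_into_rtrancl)

lemma comp_closed_rot: "h \<in> component_of D x \<Longrightarrow> h \<in> darts D \<Longrightarrow> rot D h \<in> component_of D x"
  unfolding component_of_def steps_def
  by (auto intro: rtrancl_into_rtrancl)

lemma comp_self: "x \<in> component_of D x"
  unfolding component_of_def by auto

lemma strut_back:
  assumes "univalent D h" "univalent D (edg D h)" "(x, y) \<in> (steps D)\<^sup>*" "y \<in> {h, edg D h}"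
  shows "x \<in> {h, edg D h}"
  using assms(3,4)
proof (induction rule: converse_rtrancl_induct)
  case base
  then show ?case by simp
next
  case (step y z)
  have hd: "h \<in> darts D" "edg D h \<in> darts D" using assms unfolding univalent_def by auto
  from step.hyps(1) have yd: "y \<in> darts D" and yz: "z = edg D y \<or> z = rot D y" unfolding steps_def by auto
  from step.IH[OF step.prems] have z: "z \<in> {h, edg D h}" .
  show ?case
  proof (cases "z = edg D y")
    case True
    then show ?thesis using z wf_edg_edg[OF wf] yd hd by (metis insert_iff singletonD)
  next
    case False
    then have "z = rot D y" using yz by auto
    then show ?thesis using z univ_pre[OF wf] assms(1,2) yd by auto
  qed
qed

lemma vert_triv:
  assumes "trivalent D h" "y \<in> vert D h"
  shows "vert D y = vert D h"
  using assms triv3[OF wf assms(1)] unfolding vert_def by auto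

lemma vert_card: "trivalent D h \<Longrightarrow> card (vert D h) = 3"
proof -
  assume a: "trivalent D h"
  have "rot D h \<noteq> h" "rot D (rot D h) \<noteq> h" "rot D (rot D h) \<noteq> rot D h" using triv_facts[OF wf a] by auto
  then show ?thesis unfolding vert_def by (simp add: card_insert_if)
qed

lemma vert_univ: "univalent D h \<Longrightarrow> vert D h = {h}"
  unfolding vert_def univalent_def by auto

lemma cherry_exists:
  assumes t0: "trivalent D t0" and tree: "is_tree_comp D (component_of D t0)"
  shows "\<exists>p. trivalent D p \<and> univalent D (edg D p) \<and> univalent D (edg D (rot D p))"
proof (rule ccontr)
  assume nocherry: "\<not> ?thesis"
  define C where "C = component_of D t0"
  have t0d: "t0 \<in> darts D" using t0 unfolding trivalent_def by auto
  have Cd: "C \<subseteq> darts D" unfolding C_def using comp_sub[OF wf t0d] .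
  have finC: "finite C" using Cd wf_fin[OF wf] finite_subset by blast
  define L where "L = {h\<in>C. univalent D h}"
  define T where "T = {h\<in>C. trivalent D h}"
  have CLT: "C = L \<union> T" "L \<inter> T = {}"
    using Cd univ_or_triv[OF wf] unfolding L_def T_def univalent_def trivalent_def by auto
  have finL: "finite L" and finT: "finite T" using finC unfolding L_def T_def by auto
  have vT: "\<And>h. h \<in> T \<Longrightarrow> vert D h \<subseteq> T"
  proof -
    fix h assume h: "h \<in> T"
    then have ht: "trivalent D h" "h \<in> C" unfolding T_def by auto
    have "rot D h \<in> C" "rot D (rot D h) \<in> C"
      using comp_closed_rot ht triv_facts[OF wf ht(1)] unfolding C_def by blast+
    moreover have "trivalent D (rot D h)" "trivalent D (rot D (rot D h))"
      using triv_rot[OF wf] ht by blast+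
    ultimately show "vert D h \<subseteq> T" using ht unfolding vert_def T_def by auto
  qed
  have UT: "\<Union> (vert D ` T) = T"
    using vT unfolding vert_def by auto
  have c3: "3 * card (vert D ` T) = card T"
  proof -
    have "3 * card (vert D ` T) = card (\<Union> (vert D ` T))"
    proof (rule card_partition)
      show "finite (vert D ` T)" using finT by auto
      show "finite (\<Union> (vert D ` T))" using UT finT by simp
      show "\<And>c. c \<in> vert D ` T \<Longrightarrow> card c = 3" using vert_card unfolding T_def by auto
      show "\<And>c1 c2. c1 \<in> vert D ` T \<Longrightarrow> c2 \<in> vert D ` T \<Longrightarrow> c1 \<noteq> c2 \<Longrightarrow> c1 \<inter> c2 = {}"
      proof -
        fix c1 c2 assume "c1 \<in> vert D ` T" "c2 \<in> vert D ` T" "c1 \<noteq> c2"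
        then obtain h1 h2 where h: "h1 \<in> T" "h2 \<in> T" "c1 = vert D h1" "c2 = vert D h2" "c1 \<noteq> c2" by auto
        show "c1 \<inter> c2 = {}"
        proof (rule ccontr)
          assume "c1 \<inter> c2 \<noteq> {}"
          then obtain z where "z \<in> vert D h1" "z \<in> vert D h2" using h by auto
          then have "vert D z = vert D h1" "vert D z = vert D h2"
            using vert_triv h unfolding T_def by auto
          then show False using h by auto
        qed
      qed
    qed
    then show ?thesis using UT by simp
  qed
  have VC: "vertices_in D C = (\<lambda>h. {h}) ` L \<union> vert D ` T"
  proof -
    have "vertices_in D C = vert D ` L \<union> vert D ` T" unfolding vertices_in_def using CLT by auto
    moreover have "vert D ` L = (\<lambda>h. {h}) ` L" using vert_univ unfolding L_def by auto
    ultimately show ?thesis by simp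
  qed
  have disj: "(\<lambda>h. {h}) ` L \<inter> vert D ` T = {}"
  proof -
    { fix h h' assume "h \<in> L" "h' \<in> T" "{h} = vert D h'"
      then have "vert D h' = {h}" by simp
      then have "card (vert D h') = 1" by simp
      moreover have "card (vert D h') = 3" using vert_card[of h'] \<open>h' \<in> T\<close> unfolding T_def by simp
      ultimately have False by simp }
    then show ?thesis by blast
  qed
  have cardV: "card (vertices_in D C) = card L + card (vert D ` T)"
    unfolding VC using card_Un_disjoint[OF _ _ disj] finL finT card_image[of "\<lambda>h. {h}" L]
    by (simp add: inj_on_def)
  have cardC: "card C = card L + card T" using CLT finL finT card_Un_disjoint by metis
  have eq: "card C div 2 + 1 = card (vertices_in D C)" using tree unfolding is_tree_comp_def C_def by simp
  have lt: "card (vert D ` T) < card L"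
  proof -
    define l where "l = card L"
    define t where "t = card (vert D ` T)"
    have "(l + 3 * t) div 2 + 1 = l + t" using eq cardV cardC c3 unfolding l_def t_def by simp
    then have "t < l" by presburger
    then show ?thesis unfolding l_def t_def .
  qed
  have partner: "\<And>h. h \<in> L \<Longrightarrow> edg D h \<in> T"
  proof -
    fix h assume h: "h \<in> L"
    then have hC: "h \<in> C" and hu: "univalent D h" unfolding L_def by auto
    have eC: "edg D h \<in> C" using comp_closed_edg hC Cd unfolding C_def by blast
    show "edg D h \<in> T"
    proof (rule ccontr)
      assume "edg D h \<notin> T"
      then have eu: "univalent D (edg D h)" using eC CLT unfolding L_def by auto
      have "(t0, h) \<in> (steps D)\<^sup>*" using hC unfolding C_def component_of_def by auto
      then have "t0 \<in> {h, edg D h}" using strut_back[OF hu eu] by auto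
      then show False using t0 hu eu unfolding univalent_def trivalent_def by auto
    qed
  qed
  have "\<not> inj_on (\<lambda>h. vert D (edg D h)) L"
  proof
    assume inj: "inj_on (\<lambda>h. vert D (edg D h)) L"
    have "card L \<le> card (vert D ` T)"
      by (rule card_inj_on_le[OF inj]) (use partner finT in auto)
    then show False using lt by simp
  qed
  then obtain h1 h2 where h12: "h1 \<in> L" "h2 \<in> L" "h1 \<noteq> h2" "vert D (edg D h1) = vert D (edg D h2)"
    unfolding inj_on_def by blast
  define e1 where "e1 = edg D h1"
  define e2 where "e2 = edg D h2"
  have e1t: "trivalent D e1" and e2t: "trivalent D e2" using partner h12 unfolding e1_def e2_def T_def by auto
  have h12d: "h1 \<in> darts D" "h2 \<in> darts D" using h12 Cd unfolding L_def by auto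
  have "e1 \<noteq> e2" using h12 h12d edg_inj[OF wf] unfolding e1_def e2_def by metis
  moreover have "e2 \<in> vert D e1" using h12(4) unfolding e1_def e2_def vert_def by auto
  ultimately have "e2 = rot D e1 \<or> e1 = rot D e2"
    using triv3[OF wf e1t] unfolding vert_def by auto
  moreover have "univalent D (edg D e1)" "univalent D (edg D e2)"
    using h12 h12d wf_edg_edg[OF wf] unfolding e1_def e2_def L_def by auto
  ultimately show False
  proof (elim disjE)
    assume "e2 = rot D e1" then show False using nocherry e1t \<open>univalent D (edg D e1)\<close> \<open>univalent D (edg D e2)\<close> by blast
  next
    assume "e1 = rot D e2" then show False using nocherry e2t \<open>univalent D (edg D e1)\<close> \<open>univalent D (edg D e2)\<close> by blast
  qed
qed

end

lemma iso_diagram: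
  assumes X: "is_diagram k X" and iso: "diag_iso X Y"
  shows "is_diagram k Y"
proof -
  have wf: "wf_graph X" using X unfolding is_diagram_def by auto
  obtain f where fb: "bij_betw f (darts X) (darts Y)"
    and fe: "\<And>h. h \<in> darts X \<Longrightarrow> f (edg X h) = edg Y (f h)"
    and fr: "\<And>h. h \<in> darts X \<Longrightarrow> f (rot X h) = rot Y (f h)"
    and fc: "\<And>h. univalent X h \<Longrightarrow> col Y (f h) = col X h"
    using iso unfolding diag_iso_def by blast
  have img: "f ` darts X = darts Y" using fb by (simp add: bij_betw_def)
  have finj: "inj_on f (darts X)" using fb by (simp add: bij_betw_def)
  have fin: "finite (darts Y)" using img wf_fin[OF wf] by (metis finite_imageI)
  have fd: "\<And>h. h \<in> darts X \<Longrightarrow> f h \<in> darts Y" using img by auto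
  have surj: "\<And>y. y \<in> darts Y \<Longrightarrow> \<exists>h\<in>darts X. y = f h" using img by auto
  have uY: "\<And>h. h \<in> darts X \<Longrightarrow> univalent Y (f h) \<longleftrightarrow> univalent X h"
  proof -
    fix h assume h: "h \<in> darts X"
    have "rot Y (f h) = f h \<longleftrightarrow> f (rot X h) = f h" using fr h by simp
    also have "\<dots> \<longleftrightarrow> rot X h = h" using finj h wf_rot[OF wf h] by (metis inj_onD)
    finally show "univalent Y (f h) \<longleftrightarrow> univalent X h" using h fd unfolding univalent_def by auto
  qed
  have edgY: "\<forall>y\<in>darts Y. edg Y y \<in> darts Y \<and> edg Y y \<noteq> y \<and> edg Y (edg Y y) = y"
  proof
    fix y assume "y \<in> darts Y"
    then obtain h where h: "h \<in> darts X" "y = f h" using surj by blast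
    have "edg Y y = f (edg X h)" using fe h by simp
    moreover have "f (edg X h) \<noteq> f h" using finj h wf_edg[OF wf h(1)] wf_edg_ne[OF wf h(1)] by (meson inj_onD)
    moreover have "edg Y (f (edg X h)) = f h" using fe[OF wf_edg[OF wf h(1)]] wf_edg_edg[OF wf h(1)] by simp
    ultimately show "edg Y y \<in> darts Y \<and> edg Y y \<noteq> y \<and> edg Y (edg Y y) = y"
      using h fd wf_edg[OF wf h(1)] by auto
  qed
  have rotY: "\<And>y. y \<in> darts Y \<Longrightarrow> rot Y y \<in> darts Y"
    using surj fr fd wf_rot[OF wf] by metis
  have rinj: "inj_on (rot Y) (darts Y)"
  proof (rule inj_onI)
    fix y1 y2 assume y: "y1 \<in> darts Y" "y2 \<in> darts Y" "rot Y y1 = rot Y y2"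
    obtain h1 h2 where h: "h1 \<in> darts X" "h2 \<in> darts X" "y1 = f h1" "y2 = f h2" using surj y by metis
    have "f (rot X h1) = f (rot X h2)" using fr h y by simp
    then have "rot X h1 = rot X h2" using finj h wf_rot[OF wf] by (meson inj_onD)
    then show "y1 = y2" using h wf_rot_inj[OF wf] by metis
  qed
  have rbij: "bij_betw (rot Y) (darts Y) (darts Y)"
    using endo_inj_surj[OF fin _ rinj] rotY rinj unfolding bij_betw_def by blast
  have r3: "\<forall>y\<in>darts Y. rot Y y = y \<or> rot Y (rot Y (rot Y y)) = y"
  proof
    fix y assume "y \<in> darts Y"
    then obtain h where h: "h \<in> darts X" "y = f h" using surj by blast
    have "rot Y y = f (rot X h)" "rot Y (rot Y y) = f (rot X (rot X h))"
      "rot Y (rot Y (rot Y y)) = f (rot X (rot X (rot X h)))"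
      using fr h wf_rot[OF wf] by auto
    then show "rot Y y = y \<or> rot Y (rot Y (rot Y y)) = y" using wf_rot3[OF wf h(1)] h by auto
  qed
  have stepsT: "\<And>x z. (x, z) \<in> (steps X)\<^sup>* \<Longrightarrow> x \<in> darts X \<Longrightarrow> (f x, f z) \<in> (steps Y)\<^sup>*"
  proof -
    fix x z assume "(x, z) \<in> (steps X)\<^sup>*" "x \<in> darts X"
    then show "(f x, f z) \<in> (steps Y)\<^sup>*"
    proof (induction rule: rtrancl_induct)
      case base then show ?case by simp
    next
      case (step y z)
      have yd: "y \<in> darts X" and yz: "z = edg X y \<or> z = rot X y" using step.hyps(2) unfolding steps_def by auto
      have "(f y, f z) \<in> steps Y" using yz fe[OF yd] fr[OF yd] fd[OF yd] unfolding steps_def by auto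
      then show ?case using step.IH step.prems by (meson rtrancl.rtrancl_into_rtrancl)
    qed
  qed
  have compY: "\<forall>y\<in>darts Y. \<exists>h'\<in>component_of Y y. univalent Y h'"
  proof
    fix y assume "y \<in> darts Y"
    then obtain h where h: "h \<in> darts X" "y = f h" using surj by blast
    obtain h' where h': "h' \<in> component_of X h" "univalent X h'" using wf_comp[OF wf h(1)] by blast
    have "(h, h') \<in> (steps X)\<^sup>*" using h' unfolding component_of_def by auto
    then have "(y, f h') \<in> (steps Y)\<^sup>*" using stepsT h by auto
    moreover have "univalent Y (f h')" using uY h' unfolding univalent_def by auto
    ultimately show "\<exists>h'\<in>component_of Y y. univalent Y h'" unfolding component_of_def by auto
  qed
  have colY: "\<forall>y. univalent Y y \<longrightarrow> (\<exists>c\<in>{1..k}. col Y y = Some c)"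
  proof (intro allI impI)
    fix y assume y: "univalent Y y"
    then obtain h where h: "h \<in> darts X" "y = f h" using surj unfolding univalent_def by blast
    then have "univalent X h" using uY y by auto
    then show "\<exists>c\<in>{1..k}. col Y y = Some c" using fc h X unfolding is_diagram_def by auto
  qed
  show ?thesis unfolding is_diagram_def wf_graph_def
    using fin edgY rbij r3 compY colY by blast
qed

lemma iso_equiv:
  assumes "is_diagram k X" "diag_iso X Y"
  shows "(\<lambda>Z. delta X Z - delta Y Z) \<in> lin_span (rels_cl k)"
  using rels_csl.iso[OF assms(1) iso_diagram[OF assms] assms(2)] rels_cl.csl span_rel by blast

lemma cherry_zero:
  assumes X: "is_diagram 2 X" and pt: "trivalent X p"
    and au: "univalent X (edg X p)" and bu: "univalent X (edg X (rot X p))"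
    and cc: "col X (edg X p) = col X (edg X (rot X p))"
  shows "delta X \<in> lin_span (rels_cl 2)"
proof -
  have wf: "wf_graph X" using X unfolding is_diagram_def by auto
  define q where "q = rot X p"
  define r where "r = rot X q"
  define a where "a = edg X p"
  define b where "b = edg X q"
  note tf = triv_facts[OF wf pt]
  have pd: "p \<in> darts X" and qd: "q \<in> darts X" and rd: "r \<in> darts X"
    using tf unfolding q_def r_def by auto
  have rr: "rot X r = p" using triv3[OF wf pt] unfolding r_def q_def by simp
  have dist1: "p \<noteq> q" "q \<noteq> r" "p \<noteq> r" using tf unfolding q_def r_def by auto
  have ad: "a \<in> darts X" and bd: "b \<in> darts X" using wf_edg[OF wf] pd qd unfolding a_def b_def by auto
  have ea: "edg X a = p" and eb: "edg X b = q" using wf_edg_edg[OF wf] pd qd unfolding a_def b_def by auto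
  have ra: "rot X a = a" and rb: "rot X b = b" using au bu unfolding a_def b_def q_def univalent_def by auto
  have qt: "trivalent X q" and rt: "trivalent X r" using triv_rot[OF wf] pt unfolding q_def r_def by auto
  have ab: "a \<noteq> b" using ea eb dist1 by auto
  have aq: "a \<noteq> p" "a \<noteq> q" "a \<noteq> r" "b \<noteq> p" "b \<noteq> q" "b \<noteq> r"
    using ra rb pt qt rt unfolding trivalent_def by auto
  define F where "F = flip X p"
  have vp: "vert X p = {p, q, r}" unfolding vert_def q_def r_def by simp
  have dF: "darts F = darts X" "edg F = edg X" unfolding F_def flip_def by auto
  have rF: "\<And>h. rot F h = (if h \<in> {p, q, r} then rot X (rot X h) else rot X h)"
    unfolding F_def flip_def using vp by simp
  have cF: "col F = col X" unfolding F_def flip_def by simp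
  define f where "f = (\<lambda>h. if h = a then b else if h = b then a else if h = p then q else if h = q then p else h)"
  have ff: "\<And>h. f (f h) = h" unfolding f_def using ab aq dist1 by auto
  have fd: "\<And>h. h \<in> darts X \<Longrightarrow> f h \<in> darts X" unfolding f_def using ad bd pd qd by auto
  have fbij: "bij_betw f (darts X) (darts F)"
    unfolding dF by (rule bij_betw_byWitness[where f'=f]) (use ff fd in auto)
  have ep: "edg X p = a" and eq: "edg X q = b" unfolding a_def b_def by auto
  have other_edg: "\<And>h. h \<in> darts X \<Longrightarrow> h \<notin> {a, b, p, q} \<Longrightarrow> edg X h \<notin> {a, b, p, q}"
  proof -
    fix h assume h: "h \<in> darts X" "h \<notin> {a, b, p, q}"
    have e: "edg X (edg X h) = h" using wf_edg_edg[OF wf h(1)] .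
    show "edg X h \<notin> {a, b, p, q}"
    proof
      assume "edg X h \<in> {a, b, p, q}"
      then show False using e ea eb ep eq h(2) by auto
    qed
  qed
  have other_rot: "\<And>h. h \<in> darts X \<Longrightarrow> h \<notin> {a, b, p, q, r} \<Longrightarrow> rot X h \<notin> {a, b, p, q}"
  proof -
    fix h assume h: "h \<in> darts X" "h \<notin> {a, b, p, q, r}"
    show "rot X h \<notin> {a, b, p, q}"
      using wf_rot_inj[OF wf h(1)] ra rb rr ad bd rd pd h(2) q_def by auto
  qed
  have iso: "diag_iso X F"
    unfolding diag_iso_def
  proof (intro exI conjI ballI allI impI)
    show "bij_betw f (darts X) (darts F)" by (rule fbij)
  next
    fix h assume h: "h \<in> darts X"
    show "f (edg X h) = edg F (f h)"
    proof (cases "h \<in> {a, b, p, q}")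
      case True
      then show ?thesis unfolding dF f_def using ea eb ab aq dist1 unfolding a_def b_def by auto
    next
      case False
      then show ?thesis unfolding dF using other_edg[OF h False] False unfolding f_def by auto
    qed
  next
    fix h assume h: "h \<in> darts X"
    show "f (rot X h) = rot F (f h)"
    proof (cases "h \<in> {a, b, p, q, r}")
      case True
      then show ?thesis unfolding rF f_def using ra rb rr ab aq dist1 unfolding r_def q_def by auto
    next
      case False
      then show ?thesis unfolding rF using other_rot[OF h False] False unfolding f_def by auto
    qed
  next
    fix h assume "univalent X h"
    then have "h \<noteq> p" "h \<noteq> q" using pt qt unfolding univalent_def trivalent_def by auto
    then show "col F (f h) = col X h" unfolding cF f_def using cc unfolding a_def b_def q_def by auto
  qed
  have s1: "(\<lambda>Z. delta X Z + delta F Z) \<in> lin_span (rels_cl 2)"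
    using rels_csl.AS[OF X pt] rels_cl.csl span_rel unfolding F_def by blast
  have s2: "(\<lambda>Z. delta X Z - delta F Z) \<in> lin_span (rels_cl 2)"
    using iso_equiv[OF X iso] .
  have eqd: "delta X = (\<lambda>Z. (1/2) * ((delta X Z + delta F Z) + (delta X Z - delta F Z)))"
    by (rule ext) simp
  show ?thesis by (subst eqd) (rule span_scale[OF span_add[OF s2 s1]])
qed

lemma comp_trans: "(x, y) \<in> (steps D)\<^sup>* \<Longrightarrow> z \<in> component_of D y \<Longrightarrow> z \<in> component_of D x"
  unfolding component_of_def by auto

lemma attach_diagram:
  assumes E: "is_prediagram k E u" and wu: "univalent E w" and wc: "col E w = Some x"
    and n: "n1 \<notin> darts E" "n2 \<notin> darts E" "n1 \<noteq> n2"
  shows "is_diagram k (attach E u w n1 n2)"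
proof -
  define Y where "Y = attach E u w n1 n2"
  have wf: "wf_graph E" and uu: "univalent E u" and cu: "col E u = None"
    and cols: "\<And>h. univalent E h \<Longrightarrow> h \<noteq> u \<Longrightarrow> \<exists>c\<in>{1..k}. col E h = Some c"
    using E unfolding is_prediagram_def by auto
  define w' where "w' = edg E w"
  have ud: "u \<in> darts E" and wd: "w \<in> darts E" using uu wu unfolding univalent_def by auto
  have w'd: "w' \<in> darts E" using wf_edg[OF wf wd] unfolding w'_def .
  have ww': "w \<noteq> w'" using wf_edg_ne[OF wf wd] unfolding w'_def by auto
  have ew': "edg E w' = w" using wf_edg_edg[OF wf wd] unfolding w'_def .
  have wu': "w \<noteq> u" using wc cu by auto
  have ru: "rot E u = u" and rw: "rot E w = w" using uu wu unfolding univalent_def by auto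
  have nd: "n1 \<noteq> u" "n2 \<noteq> u" "n1 \<noteq> w" "n2 \<noteq> w" "n1 \<noteq> w'" "n2 \<noteq> w'"
    using n ud wd w'd by auto
  have dY: "darts Y = darts E \<union> {n1, n2}" unfolding Y_def attach_def by simp
  have eY: "\<And>h. edg Y h = (if h = w then n1 else if h = n1 then w
                 else if h = n2 then w' else if h = w' then n2 else edg E h)"
    unfolding Y_def attach_def w'_def by simp
  have rY: "\<And>h. rot Y h = (if h = u then n1 else if h = n1 then n2 else if h = n2 then u else rot E h)"
    unfolding Y_def attach_def by simp
  have cY: "col Y = (col E)(u := None, n1 := None, n2 := None)"
    unfolding Y_def attach_def by simp
  have fin: "finite (darts Y)" using dY wf_fin[OF wf] by simp
  have eoth: "\<And>h. h \<in> darts E \<Longrightarrow> h \<noteq> w \<Longrightarrow> h \<noteq> w' \<Longrightarrow> edg E h \<in> darts E \<and> edg E h \<noteq> w \<and> edg E h \<noteq> w'"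
    using wf_edg[OF wf] wf_edg_edg[OF wf] ew' unfolding w'_def by metis
  have edgY: "\<forall>h\<in>darts Y. edg Y h \<in> darts Y \<and> edg Y h \<noteq> h \<and> edg Y (edg Y h) = h"
  proof
    fix h assume h: "h \<in> darts Y"
    show "edg Y h \<in> darts Y \<and> edg Y h \<noteq> h \<and> edg Y (edg Y h) = h"
    proof (cases "h \<in> {w, n1, n2, w'}")
      case True
      then show ?thesis unfolding eY dY using nd n ww' wd w'd by auto
    next
      case False
      then have hd: "h \<in> darts E" using h dY by auto
      have "edg E h \<notin> {w, n1, n2, w'}" using eoth[of h] hd False n by auto
      then show ?thesis unfolding eY dY using False hd wf_edg[OF wf hd] wf_edg_ne[OF wf hd] wf_edg_edg[OF wf hd] by auto
    qed
  qed
  have roth: "\<And>h. h \<in> darts E \<Longrightarrow> h \<noteq> u \<Longrightarrow> rot E h \<in> darts E \<and> rot E h \<noteq> u"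
    using wf_rot[OF wf] univ_pre[OF wf uu] by blast
  have rotY: "\<And>h. h \<in> darts Y \<Longrightarrow> rot Y h \<in> darts Y"
    unfolding rY dY using wf_rot[OF wf] ud by auto
  have rinj: "inj_on (rot Y) (darts Y)"
  proof (rule inj_onI)
    fix y1 y2 assume y: "y1 \<in> darts Y" "y2 \<in> darts Y" "rot Y y1 = rot Y y2"
    show "y1 = y2"
    proof (cases "y1 \<in> {u, n1, n2}")
      case True
      then show ?thesis using y roth[of y2] n nd unfolding rY dY by (auto split: if_splits)
    next
      case False
      then have y1d: "y1 \<in> darts E" using y dY by auto
      show ?thesis
      proof (cases "y2 \<in> {u, n1, n2}")
        case True
        then show ?thesis using y roth[of y1] y1d False n nd unfolding rY dY by (auto split: if_splits)
      next
        case False2: False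
        then have "y2 \<in> darts E" using y dY by auto
        then show ?thesis using y False False2 y1d wf_rot_inj[OF wf] unfolding rY by auto
      qed
    qed
  qed
  have rbij: "bij_betw (rot Y) (darts Y) (darts Y)"
    using endo_inj_surj[OF fin _ rinj] rotY rinj unfolding bij_betw_def by blast
  have r3: "\<forall>h\<in>darts Y. rot Y h = h \<or> rot Y (rot Y (rot Y h)) = h"
  proof
    fix h assume h: "h \<in> darts Y"
    show "rot Y h = h \<or> rot Y (rot Y (rot Y h)) = h"
    proof (cases "h \<in> {u, n1, n2}")
      case True
      then show ?thesis unfolding rY using nd n by auto
    next
      case False
      then have hd: "h \<in> darts E" "h \<noteq> u" using h dY by auto
      have r1: "rot E h \<in> darts E" "rot E h \<noteq> u" using roth hd by auto
      have r2: "rot E (rot E h) \<in> darts E" "rot E (rot E h) \<noteq> u" using roth r1 by auto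
      have "rot E h \<noteq> n1" "rot E h \<noteq> n2" "rot E (rot E h) \<noteq> n1" "rot E (rot E h) \<noteq> n2"
        using r1 r2 n by auto
      then show ?thesis unfolding rY using False r1 r2 wf_rot3[OF wf hd(1)] by auto
    qed
  qed
  have wuY: "univalent Y w" unfolding univalent_def rY dY using wd wu' nd rw by auto
  have reach: "\<And>z. z \<in> {w, w', u, n1, n2} \<Longrightarrow> (z, w) \<in> (steps Y)\<^sup>*"
  proof -
    have "edg Y n1 = w" "rot Y u = n1" "rot Y n2 = u" "edg Y w' = n2" using eY rY nd n ww' by auto
    then have s1: "(n1, w) \<in> steps Y" and s2: "(u, n1) \<in> steps Y" and s3: "(n2, u) \<in> steps Y"
      and s4: "(w', n2) \<in> steps Y" unfolding steps_def dY using ud w'd by auto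
    fix z assume "z \<in> {w, w', u, n1, n2}"
    then show "(z, w) \<in> (steps Y)\<^sup>*" using s1 s2 s3 s4
      by (auto intro: converse_rtrancl_into_rtrancl)
  qed
  have Pgen: "\<And>h h'. (h, h') \<in> (steps E)\<^sup>* \<Longrightarrow> univalent E h' \<Longrightarrow> h \<in> darts E \<Longrightarrow>
               \<exists>z\<in>component_of Y h. univalent Y z"
  proof -
    fix h h' assume hh: "(h, h') \<in> (steps E)\<^sup>*" and hu: "univalent E h'" and hd0: "h \<in> darts E"
    show "\<exists>z\<in>component_of Y h. univalent Y z"
      using hh hd0
    proof (induction rule: converse_rtrancl_induct)
      case base
      show ?case
      proof (cases "h' \<in> {w, w', u}")
        case True
        then have "(h', w) \<in> (steps Y)\<^sup>*" using reach by auto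
        then show ?thesis using wuY unfolding component_of_def by auto
      next
        case False
        have "univalent Y h'" using hu False nd n unfolding univalent_def rY dY by auto
        then show ?thesis unfolding component_of_def by blast
      qed
    next
      case (step y z)
      show ?case
      proof (cases "y \<in> {w, w', u}")
        case True
        then have "(y, w) \<in> (steps Y)\<^sup>*" using reach by auto
        then show ?thesis using wuY unfolding component_of_def by auto
      next
        case False
        have yd: "y \<in> darts E" and yz: "z = edg E y \<or> z = rot E y" using step.hyps(1) unfolding steps_def by auto
        have zd: "z \<in> darts E" using steps_darts[OF wf step.hyps(1)] by auto
        have "y \<noteq> n1" "y \<noteq> n2" using yd n by auto
        then have "(y, z) \<in> steps Y" using yz False yd unfolding steps_def dY eY rY by auto
        then show ?thesis using step.IH[OF zd] comp_trans[of y z Y] by blast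
      qed
    qed
  qed
  have compY: "\<forall>h\<in>darts Y. \<exists>h'\<in>component_of Y h. univalent Y h'"
  proof
    fix h assume h: "h \<in> darts Y"
    show "\<exists>h'\<in>component_of Y h. univalent Y h'"
    proof (cases "h \<in> {n1, n2}")
      case True
      then have "(h, w) \<in> (steps Y)\<^sup>*" using reach by auto
      then show ?thesis using wuY unfolding component_of_def by auto
    next
      case False
      then have hd: "h \<in> darts E" using h dY by auto
      obtain h' where "h' \<in> component_of E h" "univalent E h'" using wf_comp[OF wf hd] by blast
      then show ?thesis using Pgen[of h h'] hd unfolding component_of_def by auto
    qed
  qed
  have colY: "\<forall>h. univalent Y h \<longrightarrow> (\<exists>c\<in>{1..k}. col Y h = Some c)"
  proof (intro allI impI)
    fix h assume hY: "univalent Y h"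
    then have "h \<notin> {u, n1, n2}" unfolding univalent_def rY using nd n by auto
    moreover then have "univalent E h" using hY unfolding univalent_def rY dY by auto
    ultimately show "\<exists>c\<in>{1..k}. col Y h = Some c" using cols[of h] unfolding cY by auto
  qed
  show ?thesis unfolding Y_def[symmetric] is_diagram_def wf_graph_def
    using fin edgY rbij r3 compY colY by blast
qed

definition strutd :: "diagram \<Rightarrow> nat set" where
  "strutd Z = {h\<in>darts Z. univalent Z h \<and> univalent Z (edg Z h)}"

definition ns :: "diagram \<Rightarrow> nat" where
  "ns Z = card (darts Z - strutd Z)"

locale cherry =
  fixes X :: diagram and p :: nat and x y :: nat
  assumes X: "is_diagram 2 X" and pt: "trivalent X p"
    and au: "univalent X (edg X p)" and bu: "univalent X (edg X (rot X p))"
    and ca: "col X (edg X p) = Some x" and cb: "col X (edg X (rot X p)) = Some y"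
    and xy: "x \<noteq> y" and x12: "x \<in> {1..2}" and y12: "y \<in> {1..2}"
begin

definition "q = rot X p"
definition "r = rot X q"
definition "a = edg X p"
definition "b = edg X q"
definition "E = X\<lparr>darts := darts X - {p, q}, edg := (edg X)(a := b, b := a),
                   rot := (rot X)(r := r), col := (col X)(r := None)\<rparr>"
definition "Y w = attach E r w p q"

lemma wf: "wf_graph X" using X unfolding is_diagram_def by auto

lemma basics:
  shows pd: "p \<in> darts X" and qd: "q \<in> darts X" and rd: "r \<in> darts X"
    and rr: "rot X r = p" and rp: "rot X p = q" and rq: "rot X q = r"
    and dist1: "p \<noteq> q" "q \<noteq> r" "p \<noteq> r"
    and ad: "a \<in> darts X" and bd: "b \<in> darts X"
    and ea: "edg X a = p" and eb: "edg X b = q" and ep: "edg X p = a" and eq: "edg X q = b"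
    and ra: "rot X a = a" and rb: "rot X b = b"
    and qt: "trivalent X q" and rt: "trivalent X r"
    and ab: "a \<noteq> b" and aq: "a \<noteq> p" "a \<noteq> q" "a \<noteq> r" "b \<noteq> p" "b \<noteq> q" "b \<noteq> r"
    and cola: "col X a = Some x" and colb: "col X b = Some y"
proof -
  note tf = triv_facts[OF wf pt]
  show pd: "p \<in> darts X" and qd: "q \<in> darts X" and rd: "r \<in> darts X"
    using tf unfolding q_def r_def by auto
  show rr: "rot X r = p" using triv3[OF wf pt] unfolding r_def q_def by simp
  show "rot X p = q" "rot X q = r" unfolding q_def r_def by auto
  show dist1: "p \<noteq> q" "q \<noteq> r" "p \<noteq> r" using tf unfolding q_def r_def by auto
  show ad: "a \<in> darts X" and bd: "b \<in> darts X" using wf_edg[OF wf] pd qd unfolding a_def b_def by auto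
  show ea: "edg X a = p" and eb: "edg X b = q" using wf_edg_edg[OF wf] pd qd unfolding a_def b_def by auto
  show "edg X p = a" "edg X q = b" unfolding a_def b_def by auto
  show ra: "rot X a = a" and rb: "rot X b = b" using au bu unfolding a_def b_def q_def univalent_def by auto
  show qt: "trivalent X q" and rt: "trivalent X r" using triv_rot[OF wf] pt unfolding q_def r_def by auto
  show ab: "a \<noteq> b" using ea eb dist1 by auto
  show aq: "a \<noteq> p" "a \<noteq> q" "a \<noteq> r" "b \<noteq> p" "b \<noteq> q" "b \<noteq> r"
    using ra rb pt qt rt unfolding trivalent_def by auto
  show "col X a = Some x" "col X b = Some y" using ca cb unfolding a_def b_def q_def by auto
qed

lemma E_fields:
  "darts E = darts X - {p, q}" "edg E = (edg X)(a := b, b := a)"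
  "rot E = (rot X)(r := r)" "col E = (col X)(r := None)"
  unfolding E_def by simp_all

lemma edg_pre: "h \<in> darts X \<Longrightarrow> edg X h = a \<Longrightarrow> h = p"
  using wf_edg_edg[OF wf, of h] ea by simp
lemma edg_preb: "h \<in> darts X \<Longrightarrow> edg X h = b \<Longrightarrow> h = q"
  using wf_edg_edg[OF wf, of h] eb by simp
lemma edg_prep: "h \<in> darts X \<Longrightarrow> edg X h = p \<Longrightarrow> h = a"
  using wf_edg_edg[OF wf, of h] ep by simp
lemma edg_preq: "h \<in> darts X \<Longrightarrow> edg X h = q \<Longrightarrow> h = b"
  using wf_edg_edg[OF wf, of h] eq by simp

end

context cherry begin

lemma rot_pre_p: "h \<in> darts X \<Longrightarrow> rot X h = p \<Longrightarrow> h = r"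
  using wf_rot_inj[OF wf] rr rd by metis
lemma rot_pre_q: "h \<in> darts X \<Longrightarrow> rot X h = q \<Longrightarrow> h = p"
  using wf_rot_inj[OF wf] rp pd by metis
lemma rot_pre_r: "h \<in> darts X \<Longrightarrow> rot X h = r \<Longrightarrow> h = q"
  using wf_rot_inj[OF wf] rq qd by metis

lemma E_pre: "is_prediagram 2 E r"
proof -
  note bs = basics
  have dE: "darts E = darts X - {p, q}" and eE: "edg E = (edg X)(a := b, b := a)"
    and rE: "rot E = (rot X)(r := r)" and cE: "col E = (col X)(r := None)" using E_fields by auto
  have fin: "finite (darts E)" using dE wf_fin[OF wf] by auto
  have edgE: "\<forall>h\<in>darts E. edg E h \<in> darts E \<and> edg E h \<noteq> h \<and> edg E (edg E h) = h"
  proof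
    fix h assume h: "h \<in> darts E"
    then have hd: "h \<in> darts X" "h \<noteq> p" "h \<noteq> q" using dE by auto
    show "edg E h \<in> darts E \<and> edg E h \<noteq> h \<and> edg E (edg E h) = h"
    proof (cases "h = a \<or> h = b")
      case True
      then show ?thesis using bs unfolding eE dE by auto
    next
      case False
      have e: "edg X h \<in> darts X" "edg X h \<noteq> h" "edg X (edg X h) = h"
        using wf_edg[OF wf hd(1)] wf_edg_ne[OF wf hd(1)] wf_edg_edg[OF wf hd(1)] by auto
      have "edg X h \<noteq> p" "edg X h \<noteq> q" "edg X h \<noteq> a" "edg X h \<noteq> b"
        using edg_prep edg_preq edg_pre edg_preb hd False by blast+
      then show ?thesis using e False unfolding eE dE by auto
    qed
  qed
  have rotE_oth: "\<And>h. h \<in> darts X \<Longrightarrow> h \<notin> {p, q, r} \<Longrightarrow> rot X h \<in> darts X \<and> rot X h \<notin> {p, q, r}"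
    using rot_pre_p rot_pre_q rot_pre_r wf_rot[OF wf] by blast
  have rotE: "\<And>h. h \<in> darts E \<Longrightarrow> rot E h \<in> darts E"
  proof -
    fix h assume h: "h \<in> darts E"
    show "rot E h \<in> darts E"
    proof (cases "h = r")
      case True then show ?thesis using h unfolding rE by simp
    next
      case False then show ?thesis using h rotE_oth[of h] unfolding rE dE by auto
    qed
  qed
  have rinj: "inj_on (rot E) (darts E)"
  proof (rule inj_onI)
    fix y1 y2 assume y: "y1 \<in> darts E" "y2 \<in> darts E" "rot E y1 = rot E y2"
    have yd: "y1 \<in> darts X" "y2 \<in> darts X" "y1 \<notin> {p,q}" "y2 \<notin> {p,q}" using y dE by auto
    show "y1 = y2"
    proof (cases "y1 = r \<or> y2 = r")
      case True
      then show ?thesis using y yd rotE_oth unfolding rE by (auto split: if_splits)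
    next
      case False
      then show ?thesis using y yd wf_rot_inj[OF wf] unfolding rE by auto
    qed
  qed
  have rbij: "bij_betw (rot E) (darts E) (darts E)"
    using endo_inj_surj[OF fin _ rinj] rotE rinj unfolding bij_betw_def by blast
  have r3: "\<forall>h\<in>darts E. rot E h = h \<or> rot E (rot E (rot E h)) = h"
  proof
    fix h assume h: "h \<in> darts E"
    show "rot E h = h \<or> rot E (rot E (rot E h)) = h"
    proof (cases "h = r")
      case True then show ?thesis unfolding rE by simp
    next
      case False
      then have hd: "h \<in> darts X" "h \<notin> {p,q,r}" using h dE by auto
      have r1: "rot X h \<in> darts X" "rot X h \<notin> {p,q,r}" using rotE_oth hd by auto
      have r2: "rot X (rot X h) \<notin> {p,q,r}" using rotE_oth r1 by auto
      show ?thesis using wf_rot3[OF wf hd(1)] hd r1 r2 unfolding rE by auto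
    qed
  qed
  have ruE: "univalent E r" unfolding univalent_def dE rE using rd dist1 by auto
  have uE: "\<And>h. univalent X h \<Longrightarrow> univalent E h"
    unfolding univalent_def dE rE using pt qt rt unfolding trivalent_def by auto
  have compE: "\<forall>h\<in>darts E. \<exists>h'\<in>component_of E h. univalent E h'"
  proof
    fix h0 assume h0: "h0 \<in> darts E"
    then have h0d: "h0 \<in> darts X" using dE by auto
    obtain h' where h': "h' \<in> component_of X h0" "univalent X h'" using wf_comp[OF wf h0d] by blast
    have "(h0, h') \<in> (steps X)\<^sup>*" using h' unfolding component_of_def by auto
    then show "\<exists>h'\<in>component_of E h0. univalent E h'"
      using h0
    proof (induction rule: converse_rtrancl_induct)
      case base
      then show ?case using uE[OF h'(2)] unfolding component_of_def by blast
    next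
      case (step y z)
      show ?case
      proof (cases "y \<in> {a, b, r}")
        case True
        then have "univalent E y" using ruE uE au bu unfolding a_def b_def q_def by auto
        then show ?thesis unfolding component_of_def by blast
      next
        case False
        have yd: "y \<in> darts X" "y \<notin> {p, q}" using step.prems dE by auto
        have yz: "z = edg X y \<or> z = rot X y" using step.hyps(1) unfolding steps_def by auto
        have zd: "z \<in> darts X" using steps_darts[OF wf step.hyps(1)] by auto
        have zpq: "z \<noteq> p" "z \<noteq> q"
          using yz False yd edg_prep[OF yd(1)] edg_preq[OF yd(1)] rot_pre_p[OF yd(1)] rot_pre_q[OF yd(1)]
          by auto
        have zE: "z \<in> darts E" using zd zpq dE by auto
        have "(y, z) \<in> steps E" using yz False yd step.prems unfolding steps_def eE rE by auto
        then show ?thesis using step.IH[OF zE] comp_trans[of y z E] by blast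
      qed
    qed
  qed
  have colE: "\<forall>h. univalent E h \<and> h \<noteq> r \<longrightarrow> (\<exists>c\<in>{1..2}. col E h = Some c)"
  proof (intro allI impI)
    fix h assume h: "univalent E h \<and> h \<noteq> r"
    then have "univalent X h" unfolding univalent_def dE rE by auto
    then show "\<exists>c\<in>{1..2}. col E h = Some c" using X h unfolding is_diagram_def cE by auto
  qed
  have "col E r = None" unfolding cE by simp
  then show ?thesis unfolding is_prediagram_def wf_graph_def
    using fin edgE rbij r3 compE ruE colE by blast
qed

end

context cherry begin

definition "W = {w. univalent E w \<and> col E w = Some x}"

lemma W_facts:
  assumes "w \<in> W"
  shows "w \<in> darts X" "w \<noteq> p" "w \<noteq> q" "w \<noteq> r" "w \<noteq> b" "rot X w = w" "col X w = Some x"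
    "univalent E w" "col E w = Some x" "univalent X w"
proof -
  have w: "univalent E w" "col E w = Some x" using assms unfolding W_def by auto
  then show "univalent E w" "col E w = Some x" by auto
  show wr: "w \<noteq> r"
  proof
    assume "w = r"
    then have "col E w = None" using E_fields(4) by simp
    with w show False by simp
  qed
  have wd: "w \<in> darts E" "rot E w = w" using w unfolding univalent_def by auto
  then show "w \<in> darts X" "w \<noteq> p" "w \<noteq> q" using E_fields(1) by auto
  have "rot X w = rot E w" using wr E_fields(3) by simp
  then show rw: "rot X w = w" using wd by simp
  have "col X w = col E w" using wr E_fields(4) by simp
  then show "col X w = Some x" using w by simp
  show "univalent X w" unfolding univalent_def using rw wd E_fields(1) by auto
  show "w \<noteq> b" using colb xy \<open>col X w = Some x\<close> by auto
qed

lemma finW: "finite W"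
proof -
  have "W \<subseteq> darts X" using W_facts by blast
  then show ?thesis using wf_fin[OF wf] finite_subset by blast
qed

lemma aW: "a \<in> W"
  unfolding W_def univalent_def E_fields using basics by auto

lemma Y_fields:
  shows "darts (Y w) = darts X"
    and "edg (Y w) h = (if h = w then p else if h = p then w else if h = q then edg E w
             else if h = edg E w then q else edg E h)"
    and "rot (Y w) = rot X"
    and "col (Y w) = (col X)(r := None, p := None, q := None)"
proof -
  show "darts (Y w) = darts X" unfolding Y_def attach_def E_fields using pd qd by auto
  show "edg (Y w) h = (if h = w then p else if h = p then w else if h = q then edg E w
             else if h = edg E w then q else edg E h)" unfolding Y_def attach_def by simp
  show "rot (Y w) = rot X"
  proof
    fix h show "rot (Y w) h = rot X h" unfolding Y_def attach_def E_fields using rr rp rq by auto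
  qed
  show "col (Y w) = (col X)(r := None, p := None, q := None)" unfolding Y_def attach_def E_fields by auto
qed

lemma Y_diag: "w \<in> W \<Longrightarrow> is_diagram 2 (Y w)"
  unfolding Y_def
  by (rule attach_diagram[OF E_pre]) (use W_facts E_fields dist1 in auto)

lemma Y_triv: "trivalent (Y w) p"
  unfolding trivalent_def Y_fields using pd dist1 rp by auto

lemma iso_swap:
  assumes "diag_iso X Z" "is_diagram 2 X"
  shows "(\<lambda>V. delta Z V - delta X V) \<in> lin_span (rels_cl 2)"
  using span_scale[OF iso_equiv[OF assms(2) assms(1)], of "-1"] by simp

lemma term_a: "(\<lambda>V. delta (Y a) V - delta X V) \<in> lin_span (rels_cl 2)"
proof (rule iso_swap[OF _ X])
  have e: "edg (Y a) = edg X"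
  proof
    fix h show "edg (Y a) h = edg X h"
      unfolding Y_fields E_fields using ab aq ea eb ep eq by auto
  qed
  show "diag_iso X (Y a)" unfolding diag_iso_def
  proof (intro exI[of _ id] conjI ballI allI impI)
    show "bij_betw id (darts X) (darts (Y a))" unfolding Y_fields by simp
  next
    fix h show "id (edg X h) = edg (Y a) (id h)" using e by simp
  next
    fix h show "id (rot X h) = rot (Y a) (id h)" unfolding Y_fields by simp
  next
    fix h assume "univalent X h"
    then have "h \<noteq> r" "h \<noteq> p" "h \<noteq> q" using pt qt rt unfolding univalent_def trivalent_def by auto
    then show "col (Y a) (id h) = col X h" unfolding Y_fields by simp
  qed
qed

end

context cherry begin

lemma w2:
  assumes "w \<in> W" "w \<noteq> a"
  shows "edg E w = edg X w" "edg X w \<in> darts X" "edg X w \<noteq> p" "edg X w \<noteq> q"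
    "edg X w \<noteq> a" "edg X w \<noteq> b" "edg X w \<noteq> w" "edg X (edg X w) = w"
proof -
  note wf' = W_facts[OF assms(1)]
  show "edg E w = edg X w" using assms wf' unfolding E_fields by auto
  show "edg X w \<in> darts X" "edg X w \<noteq> w" "edg X (edg X w) = w"
    using wf_edg[OF wf] wf_edg_ne[OF wf] wf_edg_edg[OF wf] wf'(1) by auto
  show "edg X w \<noteq> p" using edg_prep wf'(1) assms(2) by blast
  show "edg X w \<noteq> q" using edg_preq wf'(1) wf'(5) by blast
  show "edg X w \<noteq> a" using edg_pre wf'(1) wf'(2) by blast
  show "edg X w \<noteq> b" using edg_preb wf'(1) wf'(3) by blast
qed

lemma Yw_edg:
  assumes "w \<in> W" "w \<noteq> a"
  shows "edg (Y w) p = w" "edg (Y w) q = edg X w"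
  unfolding Y_fields using w2[OF assms] W_facts[OF assms(1)] dist1 by auto

lemma term_same:
  assumes w: "w \<in> W" "w \<noteq> a" and u: "univalent E (edg X w)" "edg X w \<noteq> r"
    and c: "col X (edg X w) = Some x"
  shows "delta (Y w) \<in> lin_span (rels_cl 2)"
proof -
  note wf' = W_facts[OF w(1)]
  note w2' = w2[OF w]
  have uw': "univalent X (edg X w)" using u unfolding univalent_def E_fields by auto
  show ?thesis
  proof (rule cherry_zero[OF Y_diag[OF w(1)] Y_triv])
    show "univalent (Y w) (edg (Y w) p)" unfolding Yw_edg[OF w]
      using wf' unfolding univalent_def Y_fields by auto
    show "univalent (Y w) (edg (Y w) (rot (Y w) p))" unfolding Y_fields(3) rp Yw_edg[OF w]
      using uw' unfolding univalent_def Y_fields by auto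
    show "col (Y w) (edg (Y w) p) = col (Y w) (edg (Y w) (rot (Y w) p))"
      unfolding Y_fields(3) rp Yw_edg[OF w] unfolding Y_fields
      using wf' w2' u c by auto
  qed
qed

lemma term_iso:
  assumes w: "w \<in> W" "w \<noteq> a" and u: "univalent E (edg X w)" "edg X w \<noteq> r"
    and c: "col X (edg X w) \<noteq> Some x"
  shows "(\<lambda>V. delta (Y w) V - delta X V) \<in> lin_span (rels_cl 2)"
proof (rule iso_swap[OF _ X])
  note wf' = W_facts[OF w(1)]
  note w2' = w2[OF w]
  define w' where "w' = edg X w"
  have uw': "univalent X w'" using u unfolding w'_def univalent_def E_fields by auto
  obtain z where z: "z \<in> {1..2}" "col X w' = Some z" using X uw' unfolding is_diagram_def by auto
  have cw': "col X w' = Some y" using z c xy x12 y12 unfolding w'_def by auto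
  have rw': "rot X w' = w'" using uw' unfolding univalent_def by auto
  have w'd: "w' \<in> darts X" using uw' unfolding univalent_def by auto
  have dd: "w' \<noteq> p" "w' \<noteq> q" "w' \<noteq> a" "w' \<noteq> b" "w' \<noteq> w" "edg X w' = w" "w' \<noteq> r"
    using w2' u unfolding w'_def by auto
  have dw: "w \<noteq> p" "w \<noteq> q" "w \<noteq> r" "w \<noteq> b" "w \<noteq> a" using wf' w by auto
  define f where "f = (\<lambda>h. if h = a then w else if h = w then a else if h = b then w'
                        else if h = w' then b else h)"
  have ff: "\<And>h. f (f h) = h" unfolding f_def using dd dw ab by auto
  have fd: "\<And>h. h \<in> darts X \<Longrightarrow> f h \<in> darts X" unfolding f_def using ad bd w'd wf' by auto
  have eY: "\<And>h. edg (Y w) h = (if h = w then p else if h = p then w else if h = q then w'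
             else if h = w' then q else if h = a then b else if h = b then a else edg X h)"
    unfolding Y_fields E_fields using w2' dd dw aq dist1 ab unfolding w'_def by auto
  show "diag_iso X (Y w)" unfolding diag_iso_def
  proof (intro exI[of _ f] conjI ballI allI impI)
    show "bij_betw f (darts X) (darts (Y w))" unfolding Y_fields
      by (rule bij_betw_byWitness[where f'=f]) (use ff fd in auto)
  next
    fix h assume h: "h \<in> darts X"
    show "f (edg X h) = edg (Y w) (f h)"
    proof (cases "h \<in> {a, b, w, w', p, q}")
      case True
      then show ?thesis unfolding eY f_def using dd dw ab aq dist1 ea eb ep eq w2' unfolding w'_def by auto
    next
      case False
      have e: "edg X (edg X h) = h" using wf_edg_edg[OF wf h] .
      have ew: "edg X w = w'" unfolding w'_def ..
      have "edg X h \<notin> {a, b, w, w', p, q}"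
      proof
        assume "edg X h \<in> {a, b, w, w', p, q}"
        then show False using e ew dd(6) ea eb ep eq False by auto
      qed
      then show ?thesis using False unfolding eY f_def by auto
    qed
  next
    fix h assume h: "h \<in> darts X"
    show "f (rot X h) = rot (Y w) (f h)"
    proof (cases "h \<in> {a, b, w, w'}")
      case True
      then show ?thesis unfolding Y_fields f_def using ra rb rw' wf' dd dw ab by auto
    next
      case False
      have "rot X h \<notin> {a, b, w, w'}"
        using False h univ_pre[OF wf] au bu uw' wf'(10) unfolding a_def[symmetric] b_def[symmetric] q_def[symmetric] by blast
      then show ?thesis using False unfolding Y_fields f_def by auto
    qed
  next
    fix h assume hu: "univalent X h"
    then have "h \<noteq> r" "h \<noteq> p" "h \<noteq> q" using pt qt rt unfolding univalent_def trivalent_def by auto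
    moreover have "f h \<noteq> r" "f h \<noteq> p" "f h \<noteq> q" using calculation dd dw aq unfolding f_def by auto
    ultimately show "col (Y w) (f h) = col X h" unfolding Y_fields f_def
      using cola colb wf' cw' by auto
  qed
qed

end

context cherry begin

lemma term_ns:
  assumes w: "w \<in> W" "w \<noteq> a" and nu: "\<not> (univalent E (edg X w) \<and> edg X w \<noteq> r)"
  shows "ns (Y w) < ns X"
proof -
  note wf' = W_facts[OF w(1)]
  note w2' = w2[OF w]
  define w' where "w' = edg X w"
  have w'd: "w' \<in> darts X" "w' \<noteq> p" "w' \<noteq> q" "w' \<noteq> a" "w' \<noteq> b" "edg X w' = w"
    using w2' unfolding w'_def by auto
  have notu: "\<not> (univalent X w' \<and> w' \<noteq> r)"
  proof
    assume "univalent X w' \<and> w' \<noteq> r"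
    then have "univalent E w'" "w' \<noteq> r" using w'd E_fields unfolding univalent_def by auto
    then show False using nu unfolding w'_def by simp
  qed
  have ptq: "\<not> univalent X p" "\<not> univalent X q" "\<not> univalent X r"
    using pt qt rt unfolding univalent_def trivalent_def by auto
  have dY: "darts (Y w) = darts X" and rY: "rot (Y w) = rot X" using Y_fields by auto
  have uY: "\<And>h. univalent (Y w) h = univalent X h" unfolding univalent_def dY rY ..
  have eYo: "\<And>h. h \<notin> {w, p, q, w', a, b} \<Longrightarrow> edg (Y w) h = edg X h"
    unfolding Y_fields E_fields using w2' unfolding w'_def by auto
  have sub: "strutd X \<subseteq> strutd (Y w)"
  proof
    fix h assume h: "h \<in> strutd X"
    then have hd: "h \<in> darts X" and hu: "univalent X h" and ku: "univalent X (edg X h)"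
      unfolding strutd_def by auto
    have e: "edg X (edg X h) = h" using wf_edg_edg[OF wf hd] .
    have h1: "h \<noteq> p" "h \<noteq> q" "h \<noteq> r" using hu ptq by auto
    have h2: "h \<noteq> a" "h \<noteq> b" using ku ptq ea eb by auto
    have h3: "h \<noteq> w"
    proof
      assume "h = w"
      then have "edg X h = w'" unfolding w'_def by simp
      then show False using ku notu ptq by auto
    qed
    have h4: "h \<noteq> w'"
    proof
      assume "h = w'"
      then show False using hu notu ptq by auto
    qed
    have "edg (Y w) h = edg X h" using eYo h1 h2 h3 h4 by auto
    then show "h \<in> strutd (Y w)" using hd hu ku unfolding strutd_def dY uY by auto
  qed
  have aY: "a \<in> strutd (Y w)"
  proof -
    have "edg (Y w) a = b" unfolding Y_fields E_fields using w2' w'd wf' aq ab w(2) unfolding w'_def by auto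
    then show ?thesis unfolding strutd_def dY uY using ad bd ra rb univalent_def by auto
  qed
  have aX: "a \<notin> strutd X" unfolding strutd_def using ea ptq by auto
  have fin: "finite (darts X)" using wf_fin[OF wf] .
  have "darts (Y w) - strutd (Y w) \<subset> darts X - strutd X"
    using sub aY aX ad unfolding dY by blast
  then show ?thesis unfolding ns_def using fin by (meson finite_Diff psubset_card_mono)
qed

end

theorem main_ind:
  assumes "is_diagram 2 X" "trivalent X t"
  shows "delta X \<in> lin_span (rels_cl 2)"
  using assms
proof (induction "ns X" arbitrary: X t rule: less_induct)
  case less
  have X: "is_diagram 2 X" and tt: "trivalent X t" using less.prems by auto
  have wf: "wf_graph X" using X unfolding is_diagram_def by auto
  show ?case
  proof (cases "\<exists>C\<in>components X. \<not> is_tree_comp X C")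
    case True
    then obtain C where "C \<in> components X" "\<not> is_tree_comp X C" by blast
    then have "delta X \<in> rels_csl 2" using rels_csl.nontree[OF X] by blast
    then show ?thesis using rels_cl.csl span_rel by blast
  next
    case False
    have "component_of X t \<in> components X" using tt unfolding components_def trivalent_def by auto
    then have tree: "is_tree_comp X (component_of X t)" using False by blast
    obtain p where pt: "trivalent X p" and au: "univalent X (edg X p)" and bu: "univalent X (edg X (rot X p))"
      using cherry_exists[OF wf tt tree] by blast
    obtain x where x: "x \<in> {1..2}" "col X (edg X p) = Some x" using X au unfolding is_diagram_def by blast
    obtain y where y: "y \<in> {1..2}" "col X (edg X (rot X p)) = Some y" using X bu unfolding is_diagram_def by blast
    show ?thesis
    proof (cases "x = y")
      case True
      show ?thesis by (rule cherry_zero[OF X pt au bu]) (use x y True in simp)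
    next
      case False
      interpret c: cherry X p x y
        by unfold_locales (use X pt au bu x y False in auto)
      define S where "S = lin_span (rels_cl 2)"
      have st: "(\<lambda>Z. \<Sum>w\<in>c.W. delta (c.Y w) Z) \<in> S"
      proof -
        have "(\<lambda>Z. \<Sum>w\<in>{w. univalent c.E w \<and> col c.E w = Some x}. delta (attach c.E c.r w p c.q) Z) \<in> rels_cl 2"
          by (rule rels_cl.star[OF c.E_pre x(1)]) (use c.E_fields c.dist1 in auto)
        then show ?thesis unfolding S_def c.W_def c.Y_def using span_rel by blast
      qed
      define cf where "cf w = (if w = c.a \<or> (univalent c.E (edg X w) \<and> edg X w \<noteq> c.r \<and> col X (edg X w) \<noteq> Some x) then 1 else 0 :: real)" for w
      have terms: "\<And>w. w \<in> c.W \<Longrightarrow> (\<lambda>Z. delta (c.Y w) Z - cf w * delta X Z) \<in> S"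
      proof -
        fix w assume w: "w \<in> c.W"
        show "(\<lambda>Z. delta (c.Y w) Z - cf w * delta X Z) \<in> S"
        proof (cases "w = c.a")
          case True
          then show ?thesis using c.term_a unfolding S_def cf_def by simp
        next
          case na: False
          show ?thesis
          proof (cases "univalent c.E (edg X w) \<and> edg X w \<noteq> c.r")
            case True
            show ?thesis
            proof (cases "col X (edg X w) = Some x")
              case True2: True
              have "delta (c.Y w) \<in> S" using c.term_same[OF w na] True True2 unfolding S_def by blast
              moreover have "cf w = 0" unfolding cf_def using na True2 by simp
              ultimately show ?thesis by simp
            next
              case False2: False
              have "cf w = 1" unfolding cf_def using True False2 by simp
              then show ?thesis using c.term_iso[OF w na] True False2 unfolding S_def by simp
            qed
          next
            case False
            have "ns (c.Y w) < ns X" using c.term_ns[OF w na False] .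
            then have "delta (c.Y w) \<in> S"
              using less.hyps c.Y_diag[OF w] c.Y_triv unfolding S_def by blast
            moreover have "cf w = 0" unfolding cf_def using na False by auto
            ultimately show ?thesis by simp
          qed
        qed
      qed
      have sumt: "(\<lambda>Z. \<Sum>w\<in>c.W. (delta (c.Y w) Z - cf w * delta X Z)) \<in> S"
        using span_sum[OF c.finW terms[unfolded S_def]] unfolding S_def by simp
      define N where "N = (\<Sum>w\<in>c.W. cf w)"
      have Npos: "N \<ge> 1"
      proof -
        have "cf c.a = 1" unfolding cf_def by simp
        moreover have "N = cf c.a + (\<Sum>w\<in>c.W - {c.a}. cf w)"
          unfolding N_def using sum.remove[OF c.finW c.aW] by simp
        moreover have "(\<Sum>w\<in>c.W - {c.a}. cf w) \<ge> 0" unfolding cf_def by (rule sum_nonneg) simp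
        ultimately show ?thesis by simp
      qed
      have dN: "(\<lambda>Z. (\<Sum>w\<in>c.W. delta (c.Y w) Z) - (\<Sum>w\<in>c.W. (delta (c.Y w) Z - cf w * delta X Z))) \<in> S"
        using span_diff[OF st[unfolded S_def] sumt[unfolded S_def]] unfolding S_def by simp
      have eqN: "(\<lambda>Z. (\<Sum>w\<in>c.W. delta (c.Y w) Z) - (\<Sum>w\<in>c.W. (delta (c.Y w) Z - cf w * delta X Z)))
                 = (\<lambda>Z. N * delta X Z)"
        unfolding N_def by (rule ext) (simp add: sum_subtractf sum_distrib_right)
      have NS: "(\<lambda>Z. N * delta X Z) \<in> S" using dN eqN by simp
      have eqd: "delta X = (\<lambda>Z. (1 / N) * (N * delta X Z))" using Npos by (intro ext) simp
      show ?thesis by (subst eqd) (rule span_scale[OF NS[unfolded S_def]])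
    qed
  qed
qed

lemma strut_fwd:
  assumes wf: "wf_graph D" and hu: "univalent D h" and eu: "univalent D (edg D h)"
    and st: "(h, z) \<in> (steps D)\<^sup>*"
  shows "z \<in> {h, edg D h}"
  using st
proof (induction rule: rtrancl_induct)
  case base then show ?case by simp
next
  case (step y z)
  have hd: "h \<in> darts D" using hu unfolding univalent_def by auto
  have yz: "z = edg D y \<or> z = rot D y" using step.hyps(2) unfolding steps_def by auto
  show ?case using step.IH yz hu eu wf_edg_edg[OF wf hd] unfolding univalent_def by auto
qed

theorem mainTheorem2:
  assumes "is_diagram 2 D"
    and "C \<in> components D"
    and "comp_degree D C \<ge> 2"
  shows "trivial_cl 2 D"
proof -
  have wf: "wf_graph D" using assms(1) unfolding is_diagram_def by auto
  obtain h0 where h0: "h0 \<in> darts D" "C = component_of D h0" using assms(2) unfolding components_def by auto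
  have Cd: "C \<subseteq> darts D" using comp_sub[OF wf h0(1)] h0 by simp
  have "\<exists>t\<in>C. trivalent D t"
  proof (rule ccontr)
    assume "\<not> ?thesis"
    then have allu: "\<And>h. h \<in> C \<Longrightarrow> univalent D h" using Cd univ_or_triv[OF wf] by blast
    have h0C: "h0 \<in> C" using h0 unfolding component_of_def by auto
    have hu: "univalent D h0" using allu h0C by auto
    have eu: "univalent D (edg D h0)" using allu comp_closed_edg[OF wf] h0C h0 by auto
    have sub: "C \<subseteq> {h0, edg D h0}"
      using strut_fwd[OF wf hu eu] h0 unfolding component_of_def by auto
    have "vertices_in D C \<subseteq> {{h0}, {edg D h0}}"
      unfolding vertices_in_def using sub vert_univ[OF wf] hu eu by auto
    then have c1: "card (vertices_in D C) \<le> card {{h0}, {edg D h0}}"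
      by (rule card_mono[rotated]) simp
    have c2: "card {{h0}, {edg D h0}} \<le> (2::nat)" by (simp add: card_insert_if)
    have "card (vertices_in D C) \<le> 2" using c1 c2 by linarith
    then have "comp_degree D C \<le> 1" unfolding comp_degree_def by simp
    then show False using assms(3) by simp
  qed
  then obtain t where "trivalent D t" by blast
  then show ?thesis unfolding trivial_cl_def using main_ind[OF assms(1)] by blast
qed


end
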